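(* Let $a,a^\dagger$ be the annihilation and creation operators of the harmonic oscillator, $[a,a^\dagger]=1$, with vacuum $|0\rangle$ ($a|0\rangle=0$, $\langle0|a^\dagger=0$, $\langle0|0\rangle=1$). For positive integers $n$ let $A_n^\dagger$ act on the formal span of $\{(a^\dagger)^m|0\rangle\}_{m\ge0}$ by $A_n^\dagger(a^\dagger)^m|0\rangle=\frac{m!}{(mn)!}(a^\dagger)^{mn}|0\rangle$, and let $A_n$ act from the right on the formal span of $\{\langle0|a^m\}_{m\ge0}$ by $\langle0|a^mA_n=\langle0|a^{mn}$. For a prime $p$ and $\mathrm{Re}(s)>1$ let $$\zeta_p(s):=\frac{1}{p!}\langle0|\,a^p\,\frac{1}{1-(a^\dagger a)^{-s}}\,(a^\dagger)^p\,|0\rangle .$$ Then $$\zeta_p(s)=\langle0|\,a\Big(\frac{1}{1-A_p}\Big)(a^\dagger a)^{-s}\Big(\frac{1}{1-A_p^\dagger}\Big)a^\dagger\,|0\rangle .$$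
   Context: The number states $|n\rangle=(a^\dagger)^n|0\rangle/\sqrt{n!}$ are orthonormal; for a function $f$, $f(a^\dagger a)|n\rangle=f(n)|n\rangle$ for $n\ge1$, so $(a^\dagger a)^{-s}|n\rangle=n^{-s}|n\rangle$ and $\frac{1}{1-(a^\dagger a)^{-s}}|n\rangle=\frac{1}{1-n^{-s}}|n\rangle$ ($n\ge2$). Here $\frac{1}{1-A_p^\dagger}:=\sum_{k\ge0}(A_p^\dagger)^k$ and $\frac{1}{1-A_p}:=\sum_{k\ge0}A_p^k$, applied formally and paired termwise. *)

theory Defs
  imports "HOL-Analysis.Analysis" "HOL-Computational_Algebra.Primes"
begin

text \<open>A ket in the formal span of the states
  (a^dagger)^m |0> is its coefficient function c :: nat => complex
  (c m = coefficient of (a^dagger)^m |0>); a bra in the formal span of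
  <0| a^m is likewise its coefficient function b.\<close>

type_synonym ket = "nat \<Rightarrow> complex"
type_synonym bra = "nat \<Rightarrow> complex"

definition ket_pow :: "nat \<Rightarrow> ket" where
  "ket_pow m = (\<lambda>k. if k = m then 1 else 0)"

definition bra_pow :: "nat \<Rightarrow> bra" where
  "bra_pow m = (\<lambda>k. if k = m then 1 else 0)"

text \<open>Pairing, from <0| a^m (a^dagger)^n |0> = m! (if m = n else 0),
  which follows from [a, a^dagger] = 1, a|0> = 0, <0|a^dagger = 0, <0|0> = 1.\<close>
definition pairing :: "bra \<Rightarrow> ket \<Rightarrow> complex" where
  "pairing b c = (\<Sum>\<^sub>\<infinity> m. b m * c m * of_nat (fact m))"

text \<open>f(a^dagger a) acting on kets: (a^dagger)^m|0> is an eigenvector of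
  a^dagger a with eigenvalue m.\<close>
definition num_fun :: "(nat \<Rightarrow> complex) \<Rightarrow> ket \<Rightarrow> ket" where
  "num_fun f c = (\<lambda>m. f m * c m)"

definition A_dag :: "nat \<Rightarrow> ket \<Rightarrow> ket" where
  "A_dag n c = (\<lambda>k. \<Sum>\<^sub>\<infinity> m\<in>{m. m * n = k}.
      c m * of_nat (fact m) / of_nat (fact (m * n)))"

definition A_bra :: "nat \<Rightarrow> bra \<Rightarrow> bra" where
  "A_bra n b = (\<lambda>k. \<Sum>\<^sub>\<infinity> m\<in>{m. m * n = k}. b m)"

text \<open>(a^dagger a)^(-s) eigenvalue function (only used on m \<ge> 1).\<close>
definition num_pow :: "complex \<Rightarrow> nat \<Rightarrow> complex" where
  "num_pow s m = of_nat m powr (- s)"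

definition zeta_p :: "nat \<Rightarrow> complex \<Rightarrow> complex" where
  "zeta_p p s = 1 / of_nat (fact p) *
     pairing (bra_pow p) (num_fun (\<lambda>m. 1 / (1 - num_pow s m)) (ket_pow p))"

end

theory Submission
  imports Defs
begin

lemma infsum_single_pt:
  fixes x :: complex
  shows "infsum (\<lambda>m. if m = a then x else 0) A = (if a \<in> A then x else 0)"
proof -
  have "((\<lambda>m. if m = a then x else 0) has_sum (if a \<in> A then x else 0)) (A \<inter> {a})"
    by (cases "a \<in> A") (auto intro!: has_sum_finiteI)
  hence "((\<lambda>m. if m = a then x else 0) has_sum (if a \<in> A then x else 0)) A"
    by (subst has_sum_cong_neutral[where T="A \<inter> {a}"]) auto
  thus ?thesis by (rule infsumI)
qed

lemma A_bra_pow: assumes "p > 0" shows "A_bra p (bra_pow m) = bra_pow (m * p)"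
proof
  fix k
  have "A_bra p (bra_pow m) k = infsum (\<lambda>m'. if m' = m then 1 else 0) {m'. m' * p = k}"
    unfolding A_bra_def bra_pow_def by (simp add: eq_commute)
  also have "\<dots> = bra_pow (m * p) k"
    unfolding infsum_single_pt bra_pow_def by auto
  finally show "A_bra p (bra_pow m) k = bra_pow (m * p) k" .
qed

lemma A_bra_iter: assumes "p > 0" shows "(A_bra p ^^ j) (bra_pow 1) = bra_pow (p ^ j)"
  by (induction j) (simp_all add: A_bra_pow assms mult.commute)

definition sk :: "nat \<Rightarrow> complex \<Rightarrow> ket" where
  "sk m c = (\<lambda>i. if i = m then c else 0)"

lemma A_dag_sk: assumes "p > 0"
  shows "A_dag p (sk m c) = sk (m * p) (c * of_nat (fact m) / of_nat (fact (m * p)))"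
proof
  fix k
  have "A_dag p (sk m c) k = infsum (\<lambda>m'. if m' = m then c * of_nat (fact m) / of_nat (fact (m * p)) else 0) {m'. m' * p = k}"
    unfolding A_dag_def sk_def by (intro infsum_cong) auto
  also have "\<dots> = sk (m * p) (c * of_nat (fact m) / of_nat (fact (m * p))) k"
    unfolding infsum_single_pt sk_def by auto
  finally show "A_dag p (sk m c) k = sk (m * p) (c * of_nat (fact m) / of_nat (fact (m * p))) k" .
qed

lemma A_dag_iter: assumes "p > 0"
  shows "(A_dag p ^^ k) (ket_pow 1) = sk (p ^ k) (1 / of_nat (fact (p ^ k)))"
proof (induction k)
  case 0 thus ?case by (simp add: ket_pow_def sk_def)
next
  case (Suc k)
  have "fact (p ^ k) \<noteq> (0::complex)" by simp
  thus ?case using Suc by (simp add: A_dag_sk assms mult.commute)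
qed

lemma pairing_sk: "pairing (bra_pow a) (num_fun f (sk b c)) =
   (if a = b then f a * c * of_nat (fact a) else 0)"
proof -
  have "pairing (bra_pow a) (num_fun f (sk b c)) =
      infsum (\<lambda>m. if m = a then (if a = b then f a * c * of_nat (fact a) else 0) else 0) UNIV"
    unfolding pairing_def bra_pow_def num_fun_def sk_def by (intro infsum_cong) auto
  thus ?thesis by (simp add: infsum_single_pt)
qed

lemma num_pow_power: assumes "p > 0"
  shows "num_pow s (p ^ k) = (num_pow s p) ^ k"
proof -
  have L: "Ln (of_nat (p ^ k)) = of_real (ln (real (p ^ k)))"
    using assms by (intro Ln_of_nat) simp
  have "num_pow s (p ^ k) = exp (of_nat k * (- s * of_real (ln (real p))))"
    unfolding num_pow_def powr_def using assms
    by (simp only: L) (simp add: ln_realpow algebra_simps)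
  also have "\<dots> = (num_pow s p) ^ k"
    unfolding exp_of_nat_mult num_pow_def powr_def using assms by simp
  finally show ?thesis .
qed

theorem mainTheorem7:
  fixes p :: nat and s :: complex
  assumes "prime p" and "Re s > 1"
  shows "((\<lambda>(j, k). pairing ((A_bra p ^^ j) (bra_pow 1))
            (num_fun (num_pow s) ((A_dag p ^^ k) (ket_pow 1))))
          has_sum zeta_p p s) UNIV"
proof -
  have p2: "p \<ge> 2" using assms(1) prime_ge_2_nat by blast
  hence p0: "p > 0" by simp
  define w where "w = num_pow s p"
  have nw: "norm w < 1"
  proof -
    have "norm w = real p powr (- Re s)"
      unfolding w_def num_pow_def using p0 by (simp add: norm_powr_real_powr)
    also have "\<dots> < real p powr 0"
      using p2 assms(2) by (intro powr_less_mono) auto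
    finally show ?thesis using p0 by simp
  qed
  have f: "(\<lambda>(j, k). pairing ((A_bra p ^^ j) (bra_pow 1))
            (num_fun (num_pow s) ((A_dag p ^^ k) (ket_pow 1))))
        = (\<lambda>(j,k). if j = k then w ^ k else 0)"
  proof (intro ext, clarify)
    fix j k
    have inj: "p ^ j = p ^ k \<longleftrightarrow> j = k" using p2 by (simp add: power_inject_exp)
    have "fact (p ^ k) \<noteq> (0::complex)" by simp
    thus "pairing ((A_bra p ^^ j) (bra_pow 1)) (num_fun (num_pow s) ((A_dag p ^^ k) (ket_pow 1)))
        = (if j = k then w ^ k else 0)"
      unfolding A_bra_iter[OF p0] A_dag_iter[OF p0] pairing_sk inj
      by (simp add: num_pow_power[OF p0] w_def)
  qed
  have z: "zeta_p p s = 1 / (1 - w)"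
  proof -
    have "zeta_p p s = 1 / of_nat (fact p) * pairing (bra_pow p)
        (num_fun (\<lambda>m. 1 / (1 - num_pow s m)) (sk p 1))"
      unfolding zeta_p_def ket_pow_def sk_def by simp
    also have "\<dots> = 1 / (1 - w)"
      unfolding pairing_sk w_def by simp
    finally show ?thesis .
  qed
  have geo: "((\<lambda>k. w ^ k) has_sum 1 / (1 - w)) UNIV"
    by (rule norm_summable_imp_has_sum) (use nw in \<open>simp_all add: geometric_sums summable_geometric norm_power\<close>)
  have "((\<lambda>(j,k). if j = k then w ^ k else (0::complex)) \<circ> (\<lambda>k. (k,k)) has_sum 1 / (1 - w)) UNIV"
    using geo by (simp add: o_def)
  hence "((\<lambda>(j,k). if j = k then w ^ k else (0::complex)) has_sum 1 / (1 - w)) (range (\<lambda>k. (k,k)))"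
    by (subst has_sum_reindex) (auto intro: injI)
  hence "((\<lambda>(j,k). if j = k then w ^ k else (0::complex)) has_sum 1 / (1 - w)) UNIV"
    by (subst has_sum_cong_neutral[where T="range (\<lambda>k. (k,k))"]) auto
  thus ?thesis unfolding f z .
qed

end
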